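(* Let $G$, $A$, $H$, $(K,v)$, $\sigma$, $\delta$ be as in the context, let $\alpha,\alpha':H\to G$ be two transversal maps with associated cocycles $\beta,\beta'$. Then the valued field $(K(t^H,\beta')_\delta,val')$, with value group $G_{\beta'}$, is isomorphic as a valued field to $(K(t^H,\beta)_\delta,val)$, with value group $G_\beta$.
   Context: $G$ is an ordered abelian group with smallest nonzero convex subgroup $A$, $H=G/A$ with the induced order, $\rho:G\to H$ the projection. A transversal map is $\alpha:H\to G$ with $\rho\alpha=\mathrm{id}_H$, $\alpha(0)=0$; its cocycle is $\beta(h,h')=\alpha(h+h')-\alpha(h)-\alpha(h')\in A$. $G_\beta$ is $A\times H$ with $(z,h)+(z',h')=(z+z'-\beta(h,h'),h+h')$ and lexicographic order ($(z,h)\le(z',h')$ iff $h<h'$, or $h=h'$ and $z\le z'$). $(K,v)$ is a valued field of characteristic $0$, residue characteristic $p$, value group $A$, with cross-section $\sigma:A\to K^\times$ ($v(\sigma(a))=a$). For an infinite cardinal $\delta$, $K(t^H,\beta)_\delta$ is the field of formal sums $\sum_{h\in S}a_ht^h$, $S\subseteq H$ well ordered, $|S|\le\delta$, $a_h\in K$, with coefficientwise addition, multiplication $\left(\sum a_ht^h\right)\left(\sum b_ht^h\right)=\sum_l\left(\sum_{h+h'=l}a_hb_{h'}\sigma(-\beta(h,h'))\right)t^l$, and valuation $val(\sum_{h\in S}a_ht^h)=(v(a_{h_0}),h_0)$, $h_0=\min S$; similarly for $\beta'$. *)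

theory Defs
  imports Main
begin

definition subgroup_of :: "'g::linordered_ab_group_add set \<Rightarrow> bool" where
  "subgroup_of B \<longleftrightarrow> 0 \<in> B \<and> (\<forall>x\<in>B. \<forall>y\<in>B. x + y \<in> B) \<and> (\<forall>x\<in>B. - x \<in> B)"

definition convex_subgroup :: "'g::linordered_ab_group_add set \<Rightarrow> bool" where
  "convex_subgroup B \<longleftrightarrow> subgroup_of B \<and>
     (\<forall>a\<in>B. \<forall>b\<in>B. \<forall>x. a \<le> x \<and> x \<le> b \<longrightarrow> x \<in> B)"

definition smallest_nonzero_convex_subgroup :: "'g::linordered_ab_group_add set \<Rightarrow> bool" where
  "smallest_nonzero_convex_subgroup A \<longleftrightarrow> convex_subgroup A \<and> A \<noteq> {0} \<and>
     (\<forall>B. convex_subgroup B \<and> B \<noteq> {0} \<longrightarrow> A \<subseteq> B)"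

text \<open>H = G/A with the induced order, presented by the projection rho: a surjective
  order-preserving group homomorphism onto the ordered abelian group H whose kernel is A.\<close>
definition is_quotient_projection ::
  "'g::linordered_ab_group_add set \<Rightarrow> ('g \<Rightarrow> 'h::linordered_ab_group_add) \<Rightarrow> bool" where
  "is_quotient_projection A \<rho> \<longleftrightarrow> surj \<rho> \<and> (\<forall>x y. \<rho> (x + y) = \<rho> x + \<rho> y) \<and>
     {x. \<rho> x = 0} = A \<and> mono \<rho>"

definition transversal_map :: "('g \<Rightarrow> 'h::linordered_ab_group_add) \<Rightarrow> ('h \<Rightarrow> 'g::linordered_ab_group_add) \<Rightarrow> bool" where
  "transversal_map \<rho> \<alpha> \<longleftrightarrow> (\<forall>h. \<rho> (\<alpha> h) = h) \<and> \<alpha> 0 = 0"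

definition cocycle :: "('h::linordered_ab_group_add \<Rightarrow> 'g::linordered_ab_group_add) \<Rightarrow> 'h \<Rightarrow> 'h \<Rightarrow> 'g" where
  "cocycle \<alpha> h h' = \<alpha> (h + h') - \<alpha> h - \<alpha> h'"

definition gb_add :: "('h \<Rightarrow> 'h \<Rightarrow> 'g) \<Rightarrow> ('g::ab_group_add \<times> 'h::ab_group_add) \<Rightarrow> ('g \<times> 'h) \<Rightarrow> ('g \<times> 'h)" where
  "gb_add \<beta> x y = (fst x + fst y - \<beta> (snd x) (snd y), snd x + snd y)"

definition gb_le :: "('g::linorder \<times> 'h::linorder) \<Rightarrow> ('g \<times> 'h) \<Rightarrow> bool" where
  "gb_le x y \<longleftrightarrow> snd x < snd y \<or> (snd x = snd y \<and> fst x \<le> fst y)"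

definition valuation_onto :: "('k::field \<Rightarrow> 'g::linordered_ab_group_add) \<Rightarrow> 'g set \<Rightarrow> bool" where
  "valuation_onto v A \<longleftrightarrow>
     (\<forall>x y. x \<noteq> 0 \<and> y \<noteq> 0 \<longrightarrow> v (x * y) = v x + v y) \<and>
     (\<forall>x y. x \<noteq> 0 \<and> y \<noteq> 0 \<and> x + y \<noteq> 0 \<longrightarrow> min (v x) (v y) \<le> v (x + y)) \<and>
     v ` (UNIV - {0}) = A"

definition cross_section :: "('k::field \<Rightarrow> 'g::linordered_ab_group_add) \<Rightarrow> 'g set \<Rightarrow> ('g \<Rightarrow> 'k) \<Rightarrow> bool" where
  "cross_section v A \<sigma> \<longleftrightarrow>
     (\<forall>a\<in>A. \<sigma> a \<noteq> 0 \<and> v (\<sigma> a) = a) \<and> (\<forall>a\<in>A. \<forall>b\<in>A. \<sigma> (a + b) = \<sigma> a * \<sigma> b)"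

definition supp :: "('h \<Rightarrow> 'k::zero) \<Rightarrow> 'h set" where
  "supp f = {h. f h \<noteq> 0}"

definition well_ordered_set :: "'h::linorder set \<Rightarrow> bool" where
  "well_ordered_set S \<longleftrightarrow> (\<forall>T\<subseteq>S. T \<noteq> {} \<longrightarrow> (\<exists>m\<in>T. \<forall>x\<in>T. m \<le> x))"

text \<open>The infinite cardinal delta is given as the cardinality of an infinite set D.\<close>
definition hahn_carrier :: "'d set \<Rightarrow> ('h::linorder \<Rightarrow> 'k::zero) set" where
  "hahn_carrier D = {f. well_ordered_set (supp f) \<and> (card_of (supp f), card_of D) \<in> ordLeq}"

definition hahn_add :: "('h \<Rightarrow> 'k::field) \<Rightarrow> ('h \<Rightarrow> 'k) \<Rightarrow> 'h \<Rightarrow> 'k" where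
  "hahn_add f g = (\<lambda>h. f h + g h)"

definition hahn_mul :: "('g \<Rightarrow> 'k::field) \<Rightarrow> ('h \<Rightarrow> 'h \<Rightarrow> 'g::ab_group_add) \<Rightarrow>
    ('h::ab_group_add \<Rightarrow> 'k) \<Rightarrow> ('h \<Rightarrow> 'k) \<Rightarrow> 'h \<Rightarrow> 'k" where
  "hahn_mul \<sigma> \<beta> f g = (\<lambda>l. \<Sum>(h, h') \<in> {(h, h'). h + h' = l \<and> f h \<noteq> 0 \<and> g h' \<noteq> 0}.
      f h * g h' * \<sigma> (- \<beta> h h'))"

definition hahn_one :: "'h::zero \<Rightarrow> 'k::field" where
  "hahn_one = (\<lambda>h. if h = 0 then 1 else 0)"

text \<open>val(sum a_h t^h) = (v(a_{h0}), h0), h0 = min supp (meaningful for nonzero series).\<close>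
definition hahn_val :: "('k::field \<Rightarrow> 'g) \<Rightarrow> ('h::linorder \<Rightarrow> 'k) \<Rightarrow> 'g \<times> 'h" where
  "hahn_val v f = (let h0 = (LEAST h. f h \<noteq> 0) in (v (f h0), h0))"

definition valued_field_iso ::
  "'d set \<Rightarrow> 'g set \<Rightarrow> ('k::field \<Rightarrow> 'g::linordered_ab_group_add) \<Rightarrow> ('g \<Rightarrow> 'k)
   \<Rightarrow> ('h \<Rightarrow> 'h \<Rightarrow> 'g) \<Rightarrow> ('h \<Rightarrow> 'h \<Rightarrow> 'g)
   \<Rightarrow> (('h::linordered_ab_group_add \<Rightarrow> 'k) \<Rightarrow> ('h \<Rightarrow> 'k)) \<Rightarrow> ('g \<times> 'h \<Rightarrow> 'g \<times> 'h) \<Rightarrow> bool" where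
  "valued_field_iso D A v \<sigma> \<beta>' \<beta> \<phi> \<psi> \<longleftrightarrow>
     bij_betw \<phi> (hahn_carrier D) (hahn_carrier D) \<and>
     (\<forall>f\<in>hahn_carrier D. \<forall>g\<in>hahn_carrier D.
        \<phi> (hahn_add f g) = hahn_add (\<phi> f) (\<phi> g) \<and>
        \<phi> (hahn_mul \<sigma> \<beta>' f g) = hahn_mul \<sigma> \<beta> (\<phi> f) (\<phi> g)) \<and>
     \<phi> hahn_one = hahn_one \<and>
     bij_betw \<psi> (A \<times> UNIV) (A \<times> UNIV) \<and>
     (\<forall>x\<in>A \<times> UNIV. \<forall>y\<in>A \<times> UNIV.
        \<psi> (gb_add \<beta>' x y) = gb_add \<beta> (\<psi> x) (\<psi> y) \<and>
        (gb_le x y \<longleftrightarrow> gb_le (\<psi> x) (\<psi> y))) \<and>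
     (\<forall>f\<in>hahn_carrier D. f \<noteq> (\<lambda>_. 0) \<longrightarrow> hahn_val v (\<phi> f) = \<psi> (hahn_val v f))"

end

theory Submission
  imports Defs
begin

theorem proposition2p3:
  fixes A :: "'g::linordered_ab_group_add set"
    and \<rho> :: "'g \<Rightarrow> 'h::linordered_ab_group_add"
    and v :: "'k::field_char_0 \<Rightarrow> 'g"
    and \<sigma> :: "'g \<Rightarrow> 'k"
    and D :: "'d set"
    and \<alpha> \<alpha>' :: "'h \<Rightarrow> 'g"
  assumes "smallest_nonzero_convex_subgroup A"
    and "is_quotient_projection A \<rho>"
    and "valuation_onto v A"
    and "cross_section v A \<sigma>"
    and "infinite D"
    and "transversal_map \<rho> \<alpha>"
    and "transversal_map \<rho> \<alpha>'"
  shows "\<exists>\<phi> \<psi>. valued_field_iso D A v \<sigma> (cocycle \<alpha>') (cocycle \<alpha>) \<phi> \<psi>"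
proof -
  have sg: "subgroup_of A" using assms(1)
    unfolding smallest_nonzero_convex_subgroup_def convex_subgroup_def by blast
  have A0: "0 \<in> A" and Aadd: "\<And>x y. x \<in> A \<Longrightarrow> y \<in> A \<Longrightarrow> x + y \<in> A"
    and Aneg: "\<And>x. x \<in> A \<Longrightarrow> - x \<in> A"
    using sg unfolding subgroup_of_def by blast+
  have Adiff: "\<And>x y. x \<in> A \<Longrightarrow> y \<in> A \<Longrightarrow> x - y \<in> A"
    using Aadd Aneg by (metis diff_conv_add_uminus)
  have radd: "\<And>x y. \<rho> (x + y) = \<rho> x + \<rho> y" and ker: "{x. \<rho> x = 0} = A"
    using assms(2) unfolding is_quotient_projection_def by blast+
  have rdiff: "\<rho> (x - y) = \<rho> x - \<rho> y" for x y
    using radd[of "x - y" y] by (simp add: algebra_simps)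
  have inA: "\<rho> x = 0 \<Longrightarrow> x \<in> A" for x using ker by blast
  have ta: "\<And>h. \<rho> (\<alpha> h) = h" "\<alpha> 0 = 0" using assms(6) unfolding transversal_map_def by blast+
  have ta': "\<And>h. \<rho> (\<alpha>' h) = h" "\<alpha>' 0 = 0" using assms(7) unfolding transversal_map_def by blast+
  define \<gamma> where "\<gamma> h = \<alpha>' h - \<alpha> h" for h
  have gA: "\<gamma> h \<in> A" for h unfolding \<gamma>_def by (rule inA) (simp add: rdiff ta ta')
  have bA: "cocycle \<alpha> h h' \<in> A" for h h'
    unfolding cocycle_def by (rule inA) (simp add: rdiff ta)
  have bA': "cocycle \<alpha>' h h' \<in> A" for h h'
    unfolding cocycle_def by (rule inA) (simp add: rdiff ta')
  have key: "- cocycle \<alpha>' h h' + \<gamma> (h + h') = \<gamma> h + \<gamma> h' + - cocycle \<alpha> h h'" for h h'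
    unfolding cocycle_def \<gamma>_def by (simp add: algebra_simps)
  have key2: "fst x + fst y - cocycle \<alpha>' h h' + \<gamma> (h + h') = fst x + \<gamma> h + (fst y + \<gamma> h') - cocycle \<alpha> h h'" for x y :: "'g \<times> 'h" and h h'
    unfolding cocycle_def \<gamma>_def by (simp add: algebra_simps)
  have sne: "\<And>a. a \<in> A \<Longrightarrow> \<sigma> a \<noteq> 0" and sv: "\<And>a. a \<in> A \<Longrightarrow> v (\<sigma> a) = a"
    and smul: "\<And>a b. a \<in> A \<Longrightarrow> b \<in> A \<Longrightarrow> \<sigma> (a + b) = \<sigma> a * \<sigma> b"
    using assms(4) unfolding cross_section_def by blast+
  have vmul: "\<And>x y. x \<noteq> 0 \<Longrightarrow> y \<noteq> 0 \<Longrightarrow> v (x * y) = v x + v y"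
    using assms(3) unfolding valuation_onto_def by blast
  have s0: "\<sigma> 0 = 1"
  proof -
    have "\<sigma> 0 = \<sigma> 0 * \<sigma> 0" using smul[OF A0 A0] by simp
    then show ?thesis using sne[OF A0] by (metis mult_cancel_left2)
  qed
  have g0: "\<gamma> 0 = 0" unfolding \<gamma>_def using ta ta' by simp
  define \<phi> :: "('h \<Rightarrow> 'k) \<Rightarrow> ('h \<Rightarrow> 'k)" where "\<phi> f = (\<lambda>h. f h * \<sigma> (\<gamma> h))" for f
  define \<phi>i :: "('h \<Rightarrow> 'k) \<Rightarrow> ('h \<Rightarrow> 'k)" where "\<phi>i f = (\<lambda>h. f h / \<sigma> (\<gamma> h))" for f
  define \<psi> :: "'g \<times> 'h \<Rightarrow> 'g \<times> 'h" where "\<psi> x = (fst x + \<gamma> (snd x), snd x)" for x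
  define \<psi>i :: "'g \<times> 'h \<Rightarrow> 'g \<times> 'h" where "\<psi>i x = (fst x - \<gamma> (snd x), snd x)" for x
  have nz: "\<phi> f h \<noteq> 0 \<longleftrightarrow> f h \<noteq> 0" for f h
    unfolding \<phi>_def using sne[OF gA] by simp
  have nzi: "\<phi>i f h \<noteq> 0 \<longleftrightarrow> f h \<noteq> 0" for f h
    unfolding \<phi>i_def using sne[OF gA] by simp
  have suppeq: "supp (\<phi> f) = supp f" "supp (\<phi>i f) = supp f" for f
    unfolding supp_def using nz nzi by auto
  have carr: "\<phi> f \<in> hahn_carrier D \<longleftrightarrow> f \<in> hahn_carrier D"
    "\<phi>i f \<in> hahn_carrier D \<longleftrightarrow> f \<in> hahn_carrier D" for f
    unfolding hahn_carrier_def using suppeq by auto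
  have bij1: "bij_betw \<phi> (hahn_carrier D) (hahn_carrier D)"
  proof (rule bij_betw_byWitness[where f'=\<phi>i])
    show "\<forall>a\<in>hahn_carrier D. \<phi>i (\<phi> a) = a"
      unfolding \<phi>_def \<phi>i_def using sne[OF gA] by auto
    show "\<forall>a'\<in>hahn_carrier D. \<phi> (\<phi>i a') = a'"
      unfolding \<phi>_def \<phi>i_def using sne[OF gA] by auto
  qed (use carr in auto)
  have bij2: "bij_betw \<psi> (A \<times> UNIV) (A \<times> UNIV)"
  proof (rule bij_betw_byWitness[where f'=\<psi>i])
    show "\<forall>a\<in>A \<times> UNIV. \<psi>i (\<psi> a) = a" unfolding \<psi>_def \<psi>i_def by auto
    show "\<forall>a\<in>A \<times> UNIV. \<psi> (\<psi>i a) = a" unfolding \<psi>_def \<psi>i_def by auto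
    show "\<psi> ` (A \<times> UNIV) \<subseteq> A \<times> UNIV" unfolding \<psi>_def using Aadd gA by auto
    show "\<psi>i ` (A \<times> UNIV) \<subseteq> A \<times> UNIV" unfolding \<psi>i_def using Adiff gA by auto
  qed
  have addh: "\<phi> (hahn_add f g) = hahn_add (\<phi> f) (\<phi> g)" for f g
    unfolding \<phi>_def hahn_add_def by (simp add: algebra_simps)
  have mulh: "\<phi> (hahn_mul \<sigma> (cocycle \<alpha>') f g) = hahn_mul \<sigma> (cocycle \<alpha>) (\<phi> f) (\<phi> g)" for f g
  proof
    fix l
    have S: "{(h, h'). h + h' = l \<and> \<phi> f h \<noteq> 0 \<and> \<phi> g h' \<noteq> 0} = {(h, h'). h + h' = l \<and> f h \<noteq> 0 \<and> g h' \<noteq> 0}"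
      using nz by auto
    have T: "f h * g h' * \<sigma> (- cocycle \<alpha>' h h') * \<sigma> (\<gamma> l) =
        \<phi> f h * \<phi> g h' * \<sigma> (- cocycle \<alpha> h h')" if "h + h' = l" for h h'
    proof -
      have "\<sigma> (- cocycle \<alpha>' h h') * \<sigma> (\<gamma> l) = \<sigma> (- cocycle \<alpha>' h h' + \<gamma> (h + h'))"
        using smul[OF Aneg[OF bA'] gA] that by simp
      also have "\<dots> = \<sigma> (\<gamma> h + \<gamma> h' + - cocycle \<alpha> h h')" by (simp only: key)
      also have "\<dots> = \<sigma> (\<gamma> h) * \<sigma> (\<gamma> h') * \<sigma> (- cocycle \<alpha> h h')"
        using smul Aadd gA Aneg bA by metis
      finally show ?thesis unfolding \<phi>_def by (simp add: algebra_simps)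
    qed
    have "\<phi> (hahn_mul \<sigma> (cocycle \<alpha>') f g) l =
      (\<Sum>p\<in>{(h, h'). h + h' = l \<and> f h \<noteq> 0 \<and> g h' \<noteq> 0}.
         f (fst p) * g (snd p) * \<sigma> (- cocycle \<alpha>' (fst p) (snd p))) * \<sigma> (\<gamma> l)"
      unfolding hahn_mul_def \<phi>_def by (simp add: case_prod_beta)
    also have "\<dots> = (\<Sum>p\<in>{(h, h'). h + h' = l \<and> f h \<noteq> 0 \<and> g h' \<noteq> 0}.
         f (fst p) * g (snd p) * \<sigma> (- cocycle \<alpha>' (fst p) (snd p)) * \<sigma> (\<gamma> l))"
      by (rule sum_distrib_right)
    also have "\<dots> = (\<Sum>p\<in>{(h, h'). h + h' = l \<and> f h \<noteq> 0 \<and> g h' \<noteq> 0}.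
         \<phi> f (fst p) * \<phi> g (snd p) * \<sigma> (- cocycle \<alpha> (fst p) (snd p)))"
      by (rule sum.cong) (use T in auto)
    also have "\<dots> = hahn_mul \<sigma> (cocycle \<alpha>) (\<phi> f) (\<phi> g) l"
      unfolding hahn_mul_def S by (simp add: case_prod_beta)
    finally show "\<phi> (hahn_mul \<sigma> (cocycle \<alpha>') f g) l = hahn_mul \<sigma> (cocycle \<alpha>) (\<phi> f) (\<phi> g) l" .
  qed
  have oneh: "\<phi> hahn_one = hahn_one"
    unfolding \<phi>_def hahn_one_def using g0 s0 by auto
  have grp: "\<psi> (gb_add (cocycle \<alpha>') x y) = gb_add (cocycle \<alpha>) (\<psi> x) (\<psi> y) \<and>
        (gb_le x y \<longleftrightarrow> gb_le (\<psi> x) (\<psi> y))" for x y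
    unfolding \<psi>_def gb_add_def gb_le_def using key2 by auto
  have valh: "hahn_val v (\<phi> f) = \<psi> (hahn_val v f)" if "f \<in> hahn_carrier D" "f \<noteq> (\<lambda>_. 0)" for f
  proof -
    have wo: "well_ordered_set (supp f)" using that unfolding hahn_carrier_def by blast
    have ne: "supp f \<noteq> {}" using that(2) unfolding supp_def by auto
    obtain m where m: "m \<in> supp f" "\<forall>x\<in>supp f. m \<le> x" using wo ne unfolding well_ordered_set_def by blast
    have L: "(LEAST h. f h \<noteq> 0) = m"
      by (rule Least_equality) (use m in \<open>auto simp: supp_def\<close>)
    have P: "(\<lambda>h. \<phi> f h \<noteq> 0) = (\<lambda>h. f h \<noteq> 0)" using nz by auto
    have fm: "f m \<noteq> 0" using m unfolding supp_def by auto
    show ?thesis unfolding hahn_val_def Let_def P L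
      unfolding \<phi>_def \<psi>_def using vmul[OF fm sne[OF gA]] sv[OF gA] by simp
  qed
  show ?thesis unfolding valued_field_iso_def
    using bij1 bij2 addh mulh oneh grp valh by blast
qed

end
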